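(* Let $\Delta\geq1$ be an integer and $\gamma,\eta$ reals with $0<\gamma\leq1/2$ and $\Delta^{-1/2}\leq\eta\leq\gamma^2/8$. Let $G$ be a finite graph with $d_G(v)\in\{\Delta-1,\Delta\}$ for all vertices $v$ and $\Delta_2(G)\leq\eta\Delta$. Let $A\subseteq V(G)$ be a $p$-random set with $p=\gamma/\Delta$ and let $G'=G\setminus(A\cup N_G(A))$. Then for all vertices $u,v$ of $G$, \[ \mathbb{E}\big(d_{G'}(v)\,\big|\,v\in G'\big)\leq(1-\gamma+\gamma^2)d_G(v), \] and (for $u\neq v$) \[ \mathbb{E}\big(d_{G'}(u,v)\,\big|\,u,v\in G'\big)\leq(1-\gamma+\gamma^2)d_G(u,v). \]
   Context: A $p$-random subset includes each element independently with probability $p$. $N_G(v)$ is the neighbourhood of $v$, $N_G(U)=\bigcup_{u\in U}N_G(u)$, $d_G(v)=|N_G(v)|$, $d_G(u,v)=|N_G(u)\cap N_G(v)|$, $\Delta_2(G)=\max_{u\neq v}d_G(u,v)$. $G\setminus S$ is the induced subgraph on $V(G)\setminus S$. *)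

theory Defs
  imports Complex_Main
begin

text \<open>A finite simple graph is given by a finite vertex set V and a symmetric,
irreflexive adjacency relation E (only adjacencies inside V are considered).\<close>

definition simple_graph :: "'a set \<Rightarrow> ('a \<Rightarrow> 'a \<Rightarrow> bool) \<Rightarrow> bool" where
  "simple_graph V E \<longleftrightarrow> finite V \<and> (\<forall>u v. E u v \<longrightarrow> E v u) \<and> (\<forall>v. \<not> E v v)"

text \<open>Neighbourhood of v in the graph (V,E); for an induced subgraph, pass the smaller
vertex set with the same E.\<close>
definition nbhd :: "'a set \<Rightarrow> ('a \<Rightarrow> 'a \<Rightarrow> bool) \<Rightarrow> 'a \<Rightarrow> 'a set" where
  "nbhd V E v = {u \<in> V. E v u}"

definition nbhd_set :: "'a set \<Rightarrow> ('a \<Rightarrow> 'a \<Rightarrow> bool) \<Rightarrow> 'a set \<Rightarrow> 'a set" where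
  "nbhd_set V E U = (\<Union>u\<in>U. nbhd V E u)"

definition deg :: "'a set \<Rightarrow> ('a \<Rightarrow> 'a \<Rightarrow> bool) \<Rightarrow> 'a \<Rightarrow> nat" where
  "deg V E v = card (nbhd V E v)"

definition codeg :: "'a set \<Rightarrow> ('a \<Rightarrow> 'a \<Rightarrow> bool) \<Rightarrow> 'a \<Rightarrow> 'a \<Rightarrow> nat" where
  "codeg V E u v = card (nbhd V E u \<inter> nbhd V E v)"

definition del_verts :: "'a set \<Rightarrow> 'a set \<Rightarrow> 'a set" where
  "del_verts V S = V - S"

text \<open>Probability that a p-random subset of V equals A.\<close>
definition rand_prob :: "'a set \<Rightarrow> real \<Rightarrow> 'a set \<Rightarrow> real" where
  "rand_prob V p A = p ^ card A * (1 - p) ^ (card V - card A)"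

text \<open>Conditional expectation E(X | B) for a p-random subset A of V.\<close>
definition cond_exp :: "'a set \<Rightarrow> real \<Rightarrow> ('a set \<Rightarrow> real) \<Rightarrow> ('a set \<Rightarrow> bool) \<Rightarrow> real" where
  "cond_exp V p X B =
     (\<Sum>A\<in>Pow V. rand_prob V p A * (if B A then X A else 0)) /
     (\<Sum>A\<in>Pow V. rand_prob V p A * (if B A then 1 else 0))"

end

theory Submission
  imports Defs
begin

lemma exp_taylor2: fixes x :: real assumes "0 \<le> x" shows "exp (-x) \<le> 1 - x + x^2/2"
proof -
  obtain t where t: "\<bar>t\<bar> \<le> \<bar>-x\<bar>" "exp (-x) = (\<Sum>m<3. (-x) ^ m / fact m) + (exp t / fact 3) * (-x) ^ 3"
    using Maclaurin_exp_le[of "-x" 3] by blast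
  have s: "(\<Sum>m<3. (-x) ^ m / fact m) = 1 - x + x^2/2"
    by (simp add: numeral_3_eq_3 power2_eq_square)
  have "(exp t / fact 3) * (-x) ^ 3 \<le> 0"
    using assms by (simp add: mult_nonneg_nonpos)
  then show ?thesis using t s by linarith
qed

lemma binom_pow_sum:
  fixes p q :: real
  assumes "finite T"
  shows "(\<Sum>A\<in>Pow T. p ^ card A * q ^ (card T - card A)) = (p + q) ^ card T"
  using assms
proof (induction T rule: finite_induct)
  case empty then show ?case by simp
next
  case (insert x T)
  have disj: "Pow T \<inter> insert x ` Pow T = {}" using insert.hyps by auto
  have inj: "inj_on (insert x) (Pow T)" using insert.hyps
    by (smt (verit, ccfv_SIG) PowD inj_on_def insert_absorb insert_ident subset_iff)
  have fin: "finite (Pow T)" using insert.hyps by simp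
  have c1: "\<And>A. A \<in> Pow T \<Longrightarrow> card (insert x A) = Suc (card A)"
    using insert.hyps by (meson PowD finite_subset card_insert_disjoint subsetD)
  have c2: "\<And>A. A \<in> Pow T \<Longrightarrow> card A \<le> card T"
    using insert.hyps by (simp add: card_mono)
  have "(\<Sum>A\<in>Pow (insert x T). p ^ card A * q ^ (card (insert x T) - card A))
      = (\<Sum>A\<in>Pow T. p ^ card A * q ^ (Suc (card T) - card A))
        + (\<Sum>A\<in>insert x ` Pow T. p ^ card A * q ^ (Suc (card T) - card A))"
    unfolding Pow_insert using insert.hyps disj fin
    by (simp add: sum.union_disjoint)
  also have "(\<Sum>A\<in>Pow T. p ^ card A * q ^ (Suc (card T) - card A))
      = q * (\<Sum>A\<in>Pow T. p ^ card A * q ^ (card T - card A))"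
    unfolding sum_distrib_left
    by (rule sum.cong, simp, simp add: c2 Suc_diff_le)
  also have "(\<Sum>A\<in>insert x ` Pow T. p ^ card A * q ^ (Suc (card T) - card A))
      = p * (\<Sum>A\<in>Pow T. p ^ card A * q ^ (card T - card A))"
    unfolding sum_distrib_left sum.reindex[OF inj]
    by (rule sum.cong, simp, simp add: c1)
  finally show ?case using insert.IH insert.hyps by (simp add: algebra_simps)
qed


lemma avoid_prob:
  fixes p :: real
  assumes "finite V" "S \<subseteq> V"
  shows "(\<Sum>A\<in>Pow V. rand_prob V p A * (if A \<inter> S = {} then 1 else 0)) = (1 - p) ^ card S"
proof -
  have fin: "finite (Pow V)" using assms by simp
  have "(\<Sum>A\<in>Pow V. rand_prob V p A * (if A \<inter> S = {} then 1 else 0))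
      = (\<Sum>A\<in>Pow (V - S). rand_prob V p A)"
    by (rule sum.mono_neutral_cong_right[OF fin]) auto
  also have "\<dots> = (\<Sum>A\<in>Pow (V - S). (1-p) ^ card S * (p ^ card A * (1-p) ^ (card (V - S) - card A)))"
  proof (rule sum.cong[OF refl])
    fix A assume A: "A \<in> Pow (V - S)"
    have fS: "finite S" using assms finite_subset by blast
    have cVS: "card (V - S) = card V - card S" using assms fS by (simp add: card_Diff_subset)
    have cS: "card S \<le> card V" using assms by (simp add: card_mono)
    have cA: "card A \<le> card (V - S)" using A assms by (simp add: card_mono)
    have cc: "card V - card A = card S + (card (V - S) - card A)" using cVS cS cA by linarith
    note cnt = this
    show "rand_prob V p A = (1-p) ^ card S * (p ^ card A * (1-p) ^ (card (V - S) - card A))"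
      unfolding rand_prob_def cc power_add by (simp add: algebra_simps)
  qed
  also have "\<dots> = (1-p) ^ card S" using binom_pow_sum[of "V - S" p "1 - p"] assms
    by (simp add: sum_distrib_left[symmetric])
  finally show ?thesis .
qed

lemma generic_cond:
  fixes p :: real
  assumes "finite V" "S \<subseteq> V" "W \<subseteq> V" "\<And>w. w \<in> W \<Longrightarrow> C w \<subseteq> V" "p < 1"
  shows "(\<Sum>A\<in>Pow V. rand_prob V p A * (if A \<inter> S = {} then real (card {w\<in>W. A \<inter> C w = {}}) else 0))
       / (\<Sum>A\<in>Pow V. rand_prob V p A * (if A \<inter> S = {} then 1 else 0))
       = (\<Sum>w\<in>W. (1 - p) ^ card (C w - S))"
proof -
  have fW: "finite W" using assms finite_subset by blast
  have "(\<Sum>A\<in>Pow V. rand_prob V p A * (if A \<inter> S = {} then real (card {w\<in>W. A \<inter> C w = {}}) else 0))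
      = (\<Sum>A\<in>Pow V. (\<Sum>w\<in>W. rand_prob V p A * (if A \<inter> (S \<union> C w) = {} then 1 else 0)))"
  proof (rule sum.cong[OF refl])
    fix A
    have "real (card {w\<in>W. A \<inter> C w = {}}) = (\<Sum>w\<in>W. if A \<inter> C w = {} then 1 else 0)"
      unfolding card_eq_sum of_nat_sum sum.inter_filter[OF fW] by (intro sum.cong) auto
    note cnt = this
    show "rand_prob V p A * (if A \<inter> S = {} then real (card {w\<in>W. A \<inter> C w = {}}) else 0)
      = (\<Sum>w\<in>W. rand_prob V p A * (if A \<inter> (S \<union> C w) = {} then 1 else 0))"
    proof (cases "A \<inter> S = {}")
      case True
      have eq: "(\<Sum>w\<in>W. rand_prob V p A * (if A \<inter> (S \<union> C w) = {} then 1 else 0))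
         = (\<Sum>w\<in>W. rand_prob V p A * (if A \<inter> C w = {} then 1 else 0))"
        by (rule sum.cong[OF refl]) (use True in \<open>simp add: Int_Un_distrib\<close>)
      show ?thesis using True by (simp add: eq cnt sum_distrib_left)
    next
      case False
      have eq: "(\<Sum>w\<in>W. rand_prob V p A * (if A \<inter> (S \<union> C w) = {} then 1 else 0))
         = (\<Sum>w\<in>W. 0)"
        by (rule sum.cong[OF refl]) (use False in \<open>auto simp add: Int_Un_distrib\<close>)
      show ?thesis unfolding eq using False by simp
    qed
  qed
  also have "\<dots> = (\<Sum>w\<in>W. (\<Sum>A\<in>Pow V. rand_prob V p A * (if A \<inter> (S \<union> C w) = {} then 1 else 0)))"
    by (rule sum.swap)
  also have "\<dots> = (\<Sum>w\<in>W. (1 - p) ^ card (S \<union> C w))"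
    using assms by (intro sum.cong refl avoid_prob) auto
  also have "\<dots> = (\<Sum>w\<in>W. (1 - p) ^ card S * (1 - p) ^ card (C w - S))"
  proof (rule sum.cong[OF refl])
    fix w assume "w \<in> W"
    have f1: "finite S" by (rule finite_subset[OF assms(2) assms(1)])
    have f2: "finite (C w - S)" using finite_subset[OF assms(4)[OF \<open>w \<in> W\<close>] assms(1)] by simp
    have "S \<union> C w = S \<union> (C w - S)" by blast
    then have "card (S \<union> C w) = card S + card (C w - S)"
      using card_Un_disjoint[OF f1 f2] by simp
    then show "(1 - p) ^ card (S \<union> C w) = (1 - p) ^ card S * (1 - p) ^ card (C w - S)"
      by (simp add: power_add)
  qed
  finally have num: "(\<Sum>A\<in>Pow V. rand_prob V p A * (if A \<inter> S = {} then real (card {w\<in>W. A \<inter> C w = {}}) else 0))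
     = (1 - p) ^ card S * (\<Sum>w\<in>W. (1 - p) ^ card (C w - S))"
    by (simp only: sum_distrib_left)
  have nz: "(1 - p) ^ card S \<noteq> 0" using assms(5) by simp
  show ?thesis unfolding num avoid_prob[OF assms(1,2), of p] using nz by simp
qed


lemma numeric_bound:
  fixes \<Delta> n :: nat and \<gamma> \<eta> :: real
  assumes "\<Delta> \<ge> 1" "0 < \<gamma>" "\<gamma> \<le> 1/2" "1 / sqrt (real \<Delta>) \<le> \<eta>" "\<eta> \<le> \<gamma>^2 / 8"
    and n: "real n \<ge> real \<Delta> - 4 - 2 * \<eta> * real \<Delta>"
  shows "(1 - \<gamma> / real \<Delta>) ^ n \<le> 1 - \<gamma> + \<gamma>^2"
proof -
  define D where "D = real \<Delta>"
  have D1: "D \<ge> 1" using assms(1) by (simp add: D_def)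
  have sq: "sqrt D > 0" using D1 by simp
  have eta_pos: "\<eta> > 0" using assms(4) sq D_def by (smt (verit) divide_pos_pos[of 1 "sqrt D"])
  have "(1 / sqrt D)^2 \<le> \<eta>^2" using assms(4) D_def sq
    by (simp add: power_mono)
  then have invD: "1 / D \<le> \<eta>^2" using D1 by (simp add: power_divide)
  have g2: "\<gamma>^2 \<le> 1/4" using assms(2,3)
  proof -
    have "\<gamma>^2 \<le> (1/2)^2" using assms(2,3) by (intro power_mono) auto
    then show ?thesis by (simp add: power2_eq_square)
  qed
  have eta_small: "\<eta> \<le> 1/32" using assms(5) g2 by simp
  define p where "p = \<gamma> / D"
  have p0: "0 \<le> p" using assms(2) D1 by (simp add: p_def)
  define x where "x = \<gamma> * (1 - 4 / D - 2 * \<eta>)"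
  have xeq: "x = p * (D - 4 - 2 * \<eta> * D)" using D1 by (simp add: x_def p_def field_simps)
  have "(1 - p) ^ n \<le> exp (-p) ^ n"
    using p0 D1 assms(3) exp_minus_ge[of p]
    by (intro power_mono) (auto simp: p_def divide_le_eq)
  also have "\<dots> = exp (- (p * real n))" by (simp add: exp_of_nat_mult[symmetric] mult.commute)
  also have "\<dots> \<le> exp (-x)"
    using xeq n p0 D_def by (simp add: mult_left_mono)
  also have "\<dots> \<le> 1 - x + x^2/2"
  proof (rule exp_taylor2)
    have "4 / D \<le> 4 * \<eta>^2" using invD by simp
    moreover have "\<eta>^2 \<le> \<eta> * (1/32)" using eta_small eta_pos by (simp add: power2_eq_square)
    ultimately have "4 / D + 2 * \<eta> \<le> 1" using eta_small by linarith
    then show "0 \<le> x" unfolding x_def using assms(2) by simp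
  qed
  also have "\<dots> \<le> 1 - \<gamma> + \<gamma>^2"
  proof -
    have "4 / D \<le> 4 * \<eta>^2" using invD by simp
    moreover have "\<eta>^2 \<le> \<eta> * (1/32)" using eta_small eta_pos by (simp add: power2_eq_square)
    ultimately have a: "4 / D + 2 * \<eta> \<le> \<eta> * (17/8)" by linarith
    have "\<gamma>^2 \<le> \<gamma> * (1/2)" using assms(2,3) by (simp add: power2_eq_square)
    then have "\<eta> \<le> \<gamma> / 16" using assms(5) by (simp add: field_simps)
    then have b: "\<eta> * (17/8) \<le> \<gamma> * (17/128)" using assms(2) by simp
    have c: "0 \<le> 4 / D + 2 * \<eta>" using D1 eta_pos by simp
    have gx: "\<gamma> - x = \<gamma> * (4 / D + 2 * \<eta>)" by (simp add: x_def algebra_simps)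
    have "\<gamma> - x \<le> \<gamma> * (\<gamma> * (17/128))" unfolding gx using a b assms(2)
      by (intro mult_left_mono) auto
    moreover have "\<gamma> * (\<gamma> * (17/128)) = \<gamma>^2 * (17/128)" by (simp add: power2_eq_square)
    moreover have "0 \<le> \<gamma>^2" by simp
    ultimately have d: "\<gamma> - x \<le> \<gamma>^2 / 2" by linarith
    have x0: "0 \<le> x" unfolding x_def using assms(2) a b eta_small by (intro mult_nonneg_nonneg) auto
    have "x \<le> \<gamma>" using gx c assms(2) mult_nonneg_nonneg[of \<gamma> "4 / D + 2 * \<eta>"] by linarith
    then have "x^2 \<le> \<gamma>^2" using x0 by (simp add: power_mono)
    then show ?thesis using d by simp
  qed
  finally show ?thesis by (simp add: p_def D_def)
qed


definition clo :: "'a set \<Rightarrow> ('a \<Rightarrow> 'a \<Rightarrow> bool) \<Rightarrow> 'a \<Rightarrow> 'a set" where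
  "clo V E x = insert x (nbhd V E x)"

lemma clo_sub: "x \<in> V \<Longrightarrow> clo V E x \<subseteq> V"
  by (auto simp: clo_def nbhd_def)

lemma survive:
  assumes "simple_graph V E" "A \<subseteq> V" "x \<in> V"
  shows "(x \<in> del_verts V (A \<union> nbhd_set V E A)) = (A \<inter> clo V E x = {})"
  using assms unfolding simple_graph_def del_verts_def nbhd_set_def nbhd_def clo_def
  by blast

lemma nbhd_del: "nbhd (del_verts V D) E v = {w \<in> nbhd V E v. w \<in> del_verts V D}"
  by (auto simp: nbhd_def del_verts_def)

lemma deg_del:
  assumes "simple_graph V E" "A \<subseteq> V"
  shows "deg (del_verts V (A \<union> nbhd_set V E A)) E v = card {w \<in> nbhd V E v. A \<inter> clo V E w = {}}"
proof -
  have "nbhd (del_verts V (A \<union> nbhd_set V E A)) E v = {w \<in> nbhd V E v. A \<inter> clo V E w = {}}"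
    unfolding nbhd_del using survive[OF assms] by (auto simp: nbhd_def)
  then show ?thesis by (simp add: deg_def)
qed

lemma codeg_del:
  assumes "simple_graph V E" "A \<subseteq> V"
  shows "codeg (del_verts V (A \<union> nbhd_set V E A)) E u v
       = card {w \<in> nbhd V E u \<inter> nbhd V E v. A \<inter> clo V E w = {}}"
proof -
  have "nbhd (del_verts V (A \<union> nbhd_set V E A)) E u \<inter> nbhd (del_verts V (A \<union> nbhd_set V E A)) E v
     = {w \<in> nbhd V E u \<inter> nbhd V E v. A \<inter> clo V E w = {}}"
    unfolding nbhd_del using survive[OF assms] by (auto simp: nbhd_def)
  then show ?thesis by (simp add: codeg_def)
qed

lemma card_clo:
  assumes "simple_graph V E"
  shows "card (clo V E w) = Suc (deg V E w)"
proof -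
  have "w \<notin> nbhd V E w" using assms by (simp add: simple_graph_def nbhd_def)
  moreover have "finite (nbhd V E w)" using assms by (simp add: simple_graph_def nbhd_def)
  ultimately show ?thesis by (simp add: clo_def deg_def)
qed

lemma clo_inter:
  assumes "simple_graph V E"
  shows "card (clo V E w \<inter> clo V E t) \<le> 2 + codeg V E w t"
proof -
  have fin: "finite (nbhd V E w \<inter> nbhd V E t)" using assms by (simp add: simple_graph_def nbhd_def)
  have "clo V E w \<inter> clo V E t \<subseteq> {w, t} \<union> (nbhd V E w \<inter> nbhd V E t)"
    by (auto simp: clo_def)
  then have "card (clo V E w \<inter> clo V E t) \<le> card ({w, t} \<union> (nbhd V E w \<inter> nbhd V E t))"
    using fin by (intro card_mono) auto
  also have "\<dots> \<le> card {w, t} + card (nbhd V E w \<inter> nbhd V E t)" by (rule card_Un_le)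
  also have "\<dots> \<le> 2 + codeg V E w t" by (simp add: codeg_def card_insert_le_m1)
  finally show ?thesis .
qed

lemma card_diff3:
  assumes "finite X"
  shows "card X \<le> card (X - (Y \<union> Z)) + card (X \<inter> Y) + card (X \<inter> Z)"
proof -
  have "X = (X - (Y \<union> Z)) \<union> (X \<inter> Y) \<union> (X \<inter> Z)" by blast
  then have "card X = card ((X - (Y \<union> Z)) \<union> (X \<inter> Y) \<union> (X \<inter> Z))" by simp
  also have "\<dots> \<le> card ((X - (Y \<union> Z)) \<union> (X \<inter> Y)) + card (X \<inter> Z)" by (rule card_Un_le)
  also have "\<dots> \<le> card (X - (Y \<union> Z)) + card (X \<inter> Y) + card (X \<inter> Z)" using card_Un_le by simp
  finally show ?thesis .
qed


lemma sum_bound: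
  fixes \<Delta> :: nat and \<gamma> \<eta> :: real
  assumes "\<Delta> \<ge> 1" "0 < \<gamma>" "\<gamma> \<le> 1/2" "1 / sqrt (real \<Delta>) \<le> \<eta>" "\<eta> \<le> \<gamma>^2 / 8"
    and "\<And>w. w \<in> W \<Longrightarrow> real (card (C w - S)) \<ge> real \<Delta> - 4 - 2 * \<eta> * real \<Delta>"
  shows "(\<Sum>w\<in>W. (1 - \<gamma> / real \<Delta>) ^ card (C w - S)) \<le> (1 - \<gamma> + \<gamma>^2) * real (card W)"
proof -
  have "(\<Sum>w\<in>W. (1 - \<gamma> / real \<Delta>) ^ card (C w - S)) \<le> (\<Sum>w\<in>W. 1 - \<gamma> + \<gamma>^2)"
    by (intro sum_mono numeric_bound[OF assms(1-5)] assms(6))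
  then show ?thesis by (simp add: mult.commute)
qed

theorem lemma3p2:
  fixes V :: "'a set" and E :: "'a \<Rightarrow> 'a \<Rightarrow> bool"
    and \<Delta> :: nat and \<gamma> \<eta> :: real
  assumes "\<Delta> \<ge> 1"
    and "0 < \<gamma>" and "\<gamma> \<le> 1/2"
    and "1 / sqrt (real \<Delta>) \<le> \<eta>" and "\<eta> \<le> \<gamma>^2 / 8"
    and "simple_graph V E"
    and "\<forall>v\<in>V. deg V E v \<in> {\<Delta> - 1, \<Delta>}"
    and "\<forall>u\<in>V. \<forall>v\<in>V. u \<noteq> v \<longrightarrow> real (codeg V E u v) \<le> \<eta> * real \<Delta>"
  shows "(\<forall>v\<in>V.
            cond_exp V (\<gamma> / real \<Delta>)
              (\<lambda>A. real (deg (del_verts V (A \<union> nbhd_set V E A)) E v))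
              (\<lambda>A. v \<in> del_verts V (A \<union> nbhd_set V E A))
            \<le> (1 - \<gamma> + \<gamma>^2) * real (deg V E v))
       \<and> (\<forall>u\<in>V. \<forall>v\<in>V. u \<noteq> v \<longrightarrow>
            cond_exp V (\<gamma> / real \<Delta>)
              (\<lambda>A. real (codeg (del_verts V (A \<union> nbhd_set V E A)) E u v))
              (\<lambda>A. u \<in> del_verts V (A \<union> nbhd_set V E A) \<and> v \<in> del_verts V (A \<union> nbhd_set V E A))
            \<le> (1 - \<gamma> + \<gamma>^2) * real (codeg V E u v))"
proof -
  note num = assms(1-5)
  have G: "simple_graph V E" by fact
  have finV: "finite V" using G by (simp add: simple_graph_def)
  define p where "p = \<gamma> / real \<Delta>"
  have p1: "p < 1" using assms(1-3) by (simp add: p_def divide_less_eq)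
  have eta0: "0 \<le> \<eta>"
  proof -
    have "0 \<le> 1 / sqrt (real \<Delta>)" by simp
    then show ?thesis using assms(4) by linarith
  qed
  have nbV: "\<And>x. nbhd V E x \<subseteq> V" by (auto simp: nbhd_def)
  have cloV: "\<And>w. w \<in> V \<Longrightarrow> clo V E w \<subseteq> V" by (rule clo_sub)
  have cardclo: "\<And>w. w \<in> V \<Longrightarrow> real \<Delta> \<le> real (card (clo V E w))"
    using assms(7) card_clo[OF G] by force
  have cd: "\<And>w t. w \<in> V \<Longrightarrow> t \<in> V \<Longrightarrow> w \<noteq> t \<Longrightarrow> real (card (clo V E w \<inter> clo V E t)) \<le> 2 + \<eta> * real \<Delta>"
  proof -
    fix w t assume "w \<in> V" "t \<in> V" "w \<noteq> t"
    then have "real (codeg V E w t) \<le> \<eta> * real \<Delta>" using assms(8) by blast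
    moreover have "real (card (clo V E w \<inter> clo V E t)) \<le> 2 + real (codeg V E w t)"
      using clo_inter[OF G, of w t] by linarith
    ultimately show "real (card (clo V E w \<inter> clo V E t)) \<le> 2 + \<eta> * real \<Delta>" by linarith
  qed
  have finclo: "\<And>w. finite (clo V E w)" using G by (simp add: clo_def nbhd_def simple_graph_def)
  have part1: "cond_exp V p
              (\<lambda>A. real (deg (del_verts V (A \<union> nbhd_set V E A)) E v))
              (\<lambda>A. v \<in> del_verts V (A \<union> nbhd_set V E A))
            \<le> (1 - \<gamma> + \<gamma>^2) * real (deg V E v)" if v: "v \<in> V" for v
  proof -
    have "cond_exp V p
              (\<lambda>A. real (deg (del_verts V (A \<union> nbhd_set V E A)) E v))
              (\<lambda>A. v \<in> del_verts V (A \<union> nbhd_set V E A))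
        = (\<Sum>A\<in>Pow V. rand_prob V p A * (if A \<inter> clo V E v = {} then real (card {w\<in>nbhd V E v. A \<inter> clo V E w = {}}) else 0))
       / (\<Sum>A\<in>Pow V. rand_prob V p A * (if A \<inter> clo V E v = {} then 1 else 0))"
      unfolding cond_exp_def
      by (intro arg_cong2[where f="(/)"] sum.cong refl)
         (simp_all add: survive[OF G _ v] deg_del[OF G])
    also have "\<dots> = (\<Sum>w\<in>nbhd V E v. (1 - p) ^ card (clo V E w - clo V E v))"
      by (rule generic_cond[OF finV cloV[OF v] nbV _ p1]) (use nbV cloV in blast)
    also have "\<dots> \<le> (1 - \<gamma> + \<gamma>^2) * real (card (nbhd V E v))"
      unfolding p_def
    proof (rule sum_bound[OF num])
      fix w assume w: "w \<in> nbhd V E v"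
      then have wV: "w \<in> V" and wv: "w \<noteq> v" using G by (auto simp: nbhd_def simple_graph_def)
      have "card (clo V E w) \<le> card (clo V E w - (clo V E v \<union> clo V E v)) + card (clo V E w \<inter> clo V E v) + card (clo V E w \<inter> clo V E v)"
        by (rule card_diff3[OF finclo])
      then have "real (card (clo V E w)) \<le> real (card (clo V E w - clo V E v)) + 2 * real (card (clo V E w \<inter> clo V E v))"
        by simp
      then show "real \<Delta> - 4 - 2 * \<eta> * real \<Delta> \<le> real (card (clo V E w - clo V E v))"
        using cardclo[OF wV] cd[OF wV v wv] by linarith
    qed
    finally show ?thesis by (simp add: deg_def)
  qed
  have part2: "cond_exp V p
              (\<lambda>A. real (codeg (del_verts V (A \<union> nbhd_set V E A)) E u v))
              (\<lambda>A. u \<in> del_verts V (A \<union> nbhd_set V E A) \<and> v \<in> del_verts V (A \<union> nbhd_set V E A))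
            \<le> (1 - \<gamma> + \<gamma>^2) * real (codeg V E u v)" if u: "u \<in> V" and v: "v \<in> V" for u v
  proof -
    have "cond_exp V p
              (\<lambda>A. real (codeg (del_verts V (A \<union> nbhd_set V E A)) E u v))
              (\<lambda>A. u \<in> del_verts V (A \<union> nbhd_set V E A) \<and> v \<in> del_verts V (A \<union> nbhd_set V E A))
        = (\<Sum>A\<in>Pow V. rand_prob V p A * (if A \<inter> (clo V E u \<union> clo V E v) = {} then real (card {w\<in>nbhd V E u \<inter> nbhd V E v. A \<inter> clo V E w = {}}) else 0))
       / (\<Sum>A\<in>Pow V. rand_prob V p A * (if A \<inter> (clo V E u \<union> clo V E v) = {} then 1 else 0))"
      unfolding cond_exp_def
      by (intro arg_cong2[where f="(/)"] sum.cong refl)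
         (simp_all add: survive[OF G _ v] survive[OF G _ u] codeg_del[OF G] Int_Un_distrib)
    also have "\<dots> = (\<Sum>w\<in>nbhd V E u \<inter> nbhd V E v. (1 - p) ^ card (clo V E w - (clo V E u \<union> clo V E v)))"
      by (rule generic_cond[OF finV _ _ _ p1]) (use nbV cloV u v in blast)+
    also have "\<dots> \<le> (1 - \<gamma> + \<gamma>^2) * real (card (nbhd V E u \<inter> nbhd V E v))"
      unfolding p_def
    proof (rule sum_bound[OF num])
      fix w assume w: "w \<in> nbhd V E u \<inter> nbhd V E v"
      then have wV: "w \<in> V" and wv: "w \<noteq> v" and wu: "w \<noteq> u" using G by (auto simp: nbhd_def simple_graph_def)
      have "card (clo V E w) \<le> card (clo V E w - (clo V E u \<union> clo V E v)) + card (clo V E w \<inter> clo V E u) + card (clo V E w \<inter> clo V E v)"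
        by (rule card_diff3[OF finclo])
      then have "real (card (clo V E w)) \<le> real (card (clo V E w - (clo V E u \<union> clo V E v))) + real (card (clo V E w \<inter> clo V E u)) + real (card (clo V E w \<inter> clo V E v))"
        by linarith
      then show "real \<Delta> - 4 - 2 * \<eta> * real \<Delta> \<le> real (card (clo V E w - (clo V E u \<union> clo V E v)))"
        using cardclo[OF wV] cd[OF wV v wv] cd[OF wV u wu] by linarith
    qed
    finally show ?thesis by (simp add: codeg_def)
  qed
  show ?thesis using part1 part2 unfolding p_def by blast
qed

end
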